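(* Consider the single-authority continuum model described in the context, where each $u_m$ is concave but possibly non-differentiable at finitely many points, and let $u_m^-$ denote the left derivative of $u_m$. Let $\mu^*$ denote the allocation implemented (in a given state $\omega$) by the generalized APM $A^*_m(y_m,s)\equiv h^{-1}\big(h(s)+u_m^-(y_m)\big)$. Then $\mu^*$ is an optimal allocation in state $\omega$.
   Context: An authority allocates a resource of measure $q\in(0,1)$ to agents with types $(s,m)\in[0,1]\times\mathcal M$ ($\mathcal M$ finite). A state $\omega$ is a type distribution with density $f_\omega$. Allocations are measurable $\mu:\Theta\to\{0,1\}$ allocating measure at most $q$. $h:[0,1]\to\mathbb R_+$ continuous strictly increasing, $\bar s_h(\mu,\omega)=\int\mu h\,dF_\omega$, $x_m(\mu,\omega)=\int_0^1\mu(s,m)f_\omega(s,m)ds$. Utility $\xi=g(\bar s_h+\sum_mu_m(x_m))$ with $g$ continuous strictly increasing; $h(0)+u_m^-(q)\ge0$ is not needed here but the authority always prefers to allocate the full resource. An allocation is optimal in $\omega$ if it maximizes $\xi$ over feasible allocations. An APM $A=\{A_m\}$ implements $\mu$ in state $\omega$ if (1) $\mu(\theta)=1$ iff for all $\theta'$ with $\mu(\theta')=0$, $A_{m(\theta)}(x_{m(\theta)}(\mu,\omega),s(\theta))>A_{m(\theta')}(x_{m(\theta')}(\mu,\omega),s(\theta'))$, and (2) $\sum_mx_m(\mu,\omega)=q$. (Since $A^*$ is monotone, it implements an essentially unique allocation.) *)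

theory Defs
  imports "HOL-Analysis.Analysis"
begin

text \<open>Types theta = (s,m) with s in [0,1] and m in a finite type 'm.
  A state omega is represented by its density f :: real => 'm => real.\<close>

definition left_deriv :: "(real \<Rightarrow> real) \<Rightarrow> real \<Rightarrow> real" where
  "left_deriv u y = Lim (at_left y) (\<lambda>t. (u y - u t) / (y - t))"

definition is_density :: "(real \<Rightarrow> 'm::finite \<Rightarrow> real) \<Rightarrow> bool" where
  "is_density f \<longleftrightarrow>
     (\<forall>m. \<forall>s\<in>{0..1}. 0 \<le> f s m) \<and>
     (\<forall>m. set_integrable lborel {0..1} (\<lambda>s. f s m)) \<and>
     (\<Sum>m\<in>UNIV. (LINT s:{0..1}|lborel. f s m)) = 1"

definition xm :: "(real \<Rightarrow> 'm::finite \<Rightarrow> real) \<Rightarrow> (real \<Rightarrow> 'm \<Rightarrow> real) \<Rightarrow> 'm \<Rightarrow> real" where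
  "xm f \<mu> m = (LINT s:{0..1}|lborel. \<mu> s m * f s m)"

definition sbar :: "(real \<Rightarrow> real) \<Rightarrow> (real \<Rightarrow> 'm::finite \<Rightarrow> real) \<Rightarrow> (real \<Rightarrow> 'm \<Rightarrow> real) \<Rightarrow> real" where
  "sbar h f \<mu> = (\<Sum>m\<in>UNIV. (LINT s:{0..1}|lborel. \<mu> s m * h s * f s m))"

definition xi :: "(real \<Rightarrow> real) \<Rightarrow> (real \<Rightarrow> real) \<Rightarrow> ('m::finite \<Rightarrow> real \<Rightarrow> real)
    \<Rightarrow> (real \<Rightarrow> 'm \<Rightarrow> real) \<Rightarrow> (real \<Rightarrow> 'm \<Rightarrow> real) \<Rightarrow> real" where
  "xi g h u f \<mu> = g (sbar h f \<mu> + (\<Sum>m\<in>UNIV. u m (xm f \<mu> m)))"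

definition is_allocation :: "(real \<Rightarrow> 'm::finite \<Rightarrow> real) \<Rightarrow> bool" where
  "is_allocation \<mu> \<longleftrightarrow>
     (\<forall>m. \<forall>s\<in>{0..1}. \<mu> s m \<in> {0, 1}) \<and>
     (\<forall>m. set_borel_measurable lborel {0..1} (\<lambda>s. \<mu> s m))"

definition feasible :: "real \<Rightarrow> (real \<Rightarrow> 'm::finite \<Rightarrow> real) \<Rightarrow> (real \<Rightarrow> 'm \<Rightarrow> real) \<Rightarrow> bool" where
  "feasible q f \<mu> \<longleftrightarrow> is_allocation \<mu> \<and> (\<Sum>m\<in>UNIV. xm f \<mu> m) \<le> q"

definition optimal :: "real \<Rightarrow> (real \<Rightarrow> real) \<Rightarrow> (real \<Rightarrow> real) \<Rightarrow> ('m::finite \<Rightarrow> real \<Rightarrow> real)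
    \<Rightarrow> (real \<Rightarrow> 'm \<Rightarrow> real) \<Rightarrow> (real \<Rightarrow> 'm \<Rightarrow> real) \<Rightarrow> bool" where
  "optimal q g h u f \<mu> \<longleftrightarrow>
     feasible q f \<mu> \<and> (\<forall>\<nu>. feasible q f \<nu> \<longrightarrow> xi g h u f \<nu> \<le> xi g h u f \<mu>)"

definition implements :: "('m::finite \<Rightarrow> real \<Rightarrow> real \<Rightarrow> real) \<Rightarrow> real
    \<Rightarrow> (real \<Rightarrow> 'm \<Rightarrow> real) \<Rightarrow> (real \<Rightarrow> 'm \<Rightarrow> real) \<Rightarrow> bool" where
  "implements A q f \<mu> \<longleftrightarrow>
     (\<forall>m. \<forall>s\<in>{0..1}. (\<mu> s m = 1 \<longleftrightarrow>
        (\<forall>m'. \<forall>s'\<in>{0..1}. \<mu> s' m' = 0 \<longrightarrow>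
            A m (xm f \<mu> m) s > A m' (xm f \<mu> m') s'))) \<and>
     (\<Sum>m\<in>UNIV. xm f \<mu> m) = q"

text \<open>The generalized APM A*_m(y,s) = h^{-1}(h(s) + u_m^-(y)); hinv is a (strictly
  increasing) inverse of h, see the theorem's hypotheses.\<close>
definition Astar :: "(real \<Rightarrow> real) \<Rightarrow> (real \<Rightarrow> real) \<Rightarrow> ('m \<Rightarrow> real \<Rightarrow> real) \<Rightarrow> 'm \<Rightarrow> real \<Rightarrow> real \<Rightarrow> real" where
  "Astar h hinv u m y s = hinv (h s + left_deriv (u m) y)"

end

theory Submission imports Defs begin

lemma slope_sym: "((p::real) - q) / (r - s) = (q - p) / (s - r)"
  by (metis minus_diff_eq minus_divide_divide)

lemma concave_slope:
  fixes u :: "real \<Rightarrow> real"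
  assumes c: "concave_on I u" and I: "x \<in> I" "y \<in> I" and t: "x < t" "t < y"
  shows "(u x - u y) / (x - y) \<le> (u x - u t) / (x - t)"
    and "(u t - u y) / (t - y) \<le> (u x - u y) / (x - y)"
proof -
  have cv: "convex_on I (\<lambda>x. - u x)" using c by (simp add: concave_on_def)
  note L = convex_on_slope_le[OF cv I t]
  have e1: "((- u x) - (- u t)) / (x - t) = - ((u x - u t) / (x - t))" by (metis minus_diff_eq minus_divide_left diff_minus_eq_add uminus_add_conv_diff)
  have e2: "((- u x) - (- u y)) / (x - y) = - ((u x - u y) / (x - y))" by (metis minus_diff_eq minus_divide_left diff_minus_eq_add uminus_add_conv_diff)
  have e3: "((- u t) - (- u y)) / (t - y) = - ((u t - u y) / (t - y))" by (metis minus_diff_eq minus_divide_left diff_minus_eq_add uminus_add_conv_diff)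
  show "(u x - u y) / (x - y) \<le> (u x - u t) / (x - t)" using L(1) e1 e2 by linarith
  show "(u t - u y) / (t - y) \<le> (u x - u y) / (x - y)" using L(2) e2 e3 by linarith
qed

lemma left_deriv_supergrad:
  fixes u :: "real \<Rightarrow> real"
  assumes c: "concave_on {a<..<b} u" and x: "a < x" "x < b" and y: "a < y" "y < b"
  shows "u y \<le> u x + left_deriv u x * (y - x)"
proof -
  define Q where "Q t = (u x - u t) / (x - t)" for t
  define L where "L = Inf (Q ` {a<..<x})"
  define z where "z = (x + b) / 2"
  have z: "x < z" "z < b" using x by (auto simp: z_def)
  have mono: "Q t2 \<le> Q t1" if "a < t1" "t1 < t2" "t2 < x" for t1 t2
    using concave_slope(2)[OF c, of t1 x t2] that x unfolding Q_def by (auto simp: slope_sym)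
  have lb: "(u x - u z) / (x - z) \<le> Q t" if "a < t" "t < x" for t
  proof -
    have "(u t - u z) / (t - z) \<le> Q t"
      using concave_slope(1)[OF c, of t z x] that x z unfolding Q_def by (auto simp: slope_sym)
    moreover have "(u x - u z) / (x - z) \<le> (u t - u z) / (t - z)"
      using concave_slope(2)[OF c, of t z x] that x z by auto
    ultimately show ?thesis by linarith
  qed
  have ne: "Q ` {a<..<x} \<noteq> {}" using x by auto
  have bdd: "bdd_below (Q ` {a<..<x})" using lb by (auto intro!: bdd_belowI2)
  have LQ: "L \<le> Q t" if "a < t" "t < x" for t
    unfolding L_def using bdd that by (auto intro!: cInf_lower)
  have tend: "(Q \<longlongrightarrow> L) (at_left x)"
  proof (rule decreasing_tendsto)
    show "\<forall>\<^sub>F t in at_left x. L \<le> Q t"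
      using eventually_at_left_real[OF x(1)] by eventually_elim (use LQ in auto)
  next
    fix l assume "L < l"
    then obtain q0 where "q0 \<in> Q ` {a<..<x}" "q0 < l" using ne unfolding L_def
      by (meson cInf_lessD)
    then obtain t0 where t0: "a < t0" "t0 < x" "Q t0 < l" by auto
    show "\<forall>\<^sub>F t in at_left x. Q t < l"
      using eventually_at_left_real[OF t0(2)] by eventually_elim (use mono t0 in force)
  qed
  have ld: "left_deriv u x = L"
    unfolding left_deriv_def using tend unfolding Q_def
    by (intro tendsto_Lim) (auto simp: trivial_limit_at_left_real)
  show ?thesis
  proof (cases y x rule: linorder_cases)
    case less
    then have "L \<le> Q y" using LQ y by auto
    then have "L * (x - y) \<le> u x - u y" using less unfolding Q_def by (simp add: field_simps)
    then show ?thesis unfolding ld by (simp add: algebra_simps)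
  next
    case equal then show ?thesis by simp
  next
    case greater
    have "(u x - u y) / (x - y) \<le> L"
      unfolding L_def
    proof (rule cInf_greatest[OF ne])
      fix r assume "r \<in> Q ` {a<..<x}"
      then obtain t where t: "a < t" "t < x" "r = Q t" by auto
      have "(u t - u y) / (t - y) \<le> Q t"
        using concave_slope(1)[OF c, of t y x] t y greater unfolding Q_def by (auto simp: slope_sym)
      moreover have "(u x - u y) / (x - y) \<le> (u t - u y) / (t - y)"
        using concave_slope(2)[OF c, of t y x] t y greater by auto
      ultimately show "(u x - u y) / (x - y) \<le> r" using t by linarith
    qed
    then have "u y - u x \<le> L * (y - x)" using greater
      by (simp add: field_simps divide_le_eq)
    then show ?thesis unfolding ld by (simp add: algebra_simps)
  qed
qed


lemma set_int:
  fixes f \<nu> :: "real \<Rightarrow> 'm::finite \<Rightarrow> real"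
  assumes dens: "is_density f" and al: "is_allocation \<nu>" and k: "continuous_on {0..1} k"
  shows "set_integrable lborel {0..1} (\<lambda>s. \<nu> s m * k s * f s m)"
proof -
  obtain K where K: "\<forall>s\<in>{0..1}. norm (k s) \<le> K"
    using compact_imp_bounded[OF compact_continuous_image[OF k compact_Icc]]
    unfolding bounded_iff by auto
  have fi: "set_integrable lborel {0..1} (\<lambda>s. f s m)" using dens by (simp add: is_density_def)
  hence fi': "integrable lborel (\<lambda>s. indicator {0..1} s *\<^sub>R f s m)" by (simp add: set_integrable_def)
  have fm: "(\<lambda>s. indicator {0..1} s *\<^sub>R f s m) \<in> borel_measurable lborel"
    using fi' by (rule borel_measurable_integrable)
  have nm: "(\<lambda>s. indicator {0..1} s *\<^sub>R \<nu> s m) \<in> borel_measurable lborel"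
    using al by (simp add: is_allocation_def set_borel_measurable_def)
  have km0: "(\<lambda>s. indicator {0..1} s *\<^sub>R k s) \<in> borel_measurable borel"
    by (rule borel_measurable_continuous_on_indicator[OF _ k]) simp
  have km: "(\<lambda>s. indicator {0..1} s *\<^sub>R k s) \<in> borel_measurable lborel"
    using km0 by (simp add: measurable_lborel1)
  have eq: "(\<lambda>s. indicator {0..1} s *\<^sub>R (\<nu> s m * k s * f s m)) =
      (\<lambda>s. (indicator {0..1} s *\<^sub>R \<nu> s m) * (indicator {0..1} s *\<^sub>R k s) * (indicator {0..1} s *\<^sub>R f s m))"
    by (auto simp: indicator_def fun_eq_iff)
  have meas: "(\<lambda>s. indicator {0..1} s *\<^sub>R (\<nu> s m * k s * f s m)) \<in> borel_measurable lborel"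
    unfolding eq using nm km fm by measurable
  have bnd: "norm (indicator {0..1} s *\<^sub>R (\<nu> s m * k s * f s m)) \<le> norm (K *\<^sub>R (indicator {0..1} s *\<^sub>R f s m))" for s
  proof (cases "s \<in> {0..1}")
    case True
    have "\<bar>\<nu> s m\<bar> \<le> 1" using al True unfolding is_allocation_def by (metis abs_0 abs_1 insert_iff order_refl zero_le_one singletonD)
    moreover have "\<bar>k s\<bar> \<le> K" using K True by auto
    ultimately have "\<bar>\<nu> s m * k s\<bar> \<le> 1 * K" unfolding abs_mult
      by (intro mult_mono) auto
    hence "\<bar>\<nu> s m * k s * f s m\<bar> \<le> K * \<bar>f s m\<bar>" unfolding abs_mult[of _ "f s m"]
      by (intro mult_right_mono) auto
    moreover have "K * \<bar>f s m\<bar> \<le> \<bar>K\<bar> * \<bar>f s m\<bar>" by (intro mult_right_mono) auto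
    ultimately show ?thesis using True by (simp add: abs_mult)
  qed simp
  have "integrable lborel (\<lambda>s. K *\<^sub>R (indicator {0..1} s *\<^sub>R f s m))"
    using fi' by simp
  then show ?thesis unfolding set_integrable_def
    by (rule Bochner_Integration.integrable_bound[OF _ meas]) (use bnd in auto)
qed


lemma set_int1:
  fixes f \<nu> :: "real \<Rightarrow> 'm::finite \<Rightarrow> real"
  assumes dens: "is_density f" and al: "is_allocation \<nu>"
  shows "set_integrable lborel {0..1} (\<lambda>s. \<nu> s m * f s m)"
  using set_int[OF dens al continuous_on_const[of "{0..1}" 1], of m] by simp

lemma xm_nonneg:
  fixes f \<nu> :: "real \<Rightarrow> 'm::finite \<Rightarrow> real"
  assumes dens: "is_density f" and al: "is_allocation \<nu>"
  shows "0 \<le> xm f \<nu> m"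
proof -
  have "(LINT (s::real):{0..1}|lborel. (0::real)) \<le> (LINT s:{0..1}|lborel. \<nu> s m * f s m)"
  proof (rule set_integral_mono)
    show "set_integrable lborel {0..1::real} (\<lambda>s. 0::real)" by (simp add: set_integrable_def)
    show "set_integrable lborel {0..1} (\<lambda>s. \<nu> s m * f s m)" by (rule set_int1[OF dens al])
    fix s :: real assume "s \<in> {0..1}"
    then have "0 \<le> f s m" "\<nu> s m = 0 \<or> \<nu> s m = 1" using dens al
      unfolding is_density_def is_allocation_def by auto
    then show "0 \<le> \<nu> s m * f s m" by auto
  qed
  then show ?thesis by (simp add: xm_def set_lebesgue_integral_def)
qed

lemma sep_c:
  fixes A B :: "real set"
  assumes "\<forall>a\<in>A. \<forall>b\<in>B. b < a" "\<forall>a\<in>A. -M \<le> a" "\<forall>b\<in>B. b \<le> M"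
  shows "\<exists>c. (\<forall>a\<in>A. c \<le> a) \<and> (\<forall>b\<in>B. b \<le> c)"
proof (cases "A = {}")
  case True then show ?thesis using assms by auto
next
  case False
  have bdd: "bdd_below A" using assms(2) by (auto intro!: bdd_belowI)
  show ?thesis
    by (rule exI[of _ "Inf A"]) (use False bdd assms(1) in \<open>auto intro: cInf_lower cInf_greatest less_imp_le\<close>)
qed


theorem proposition10:
  fixes q :: real
    and h hinv g :: "real \<Rightarrow> real"
    and u :: "'m::finite \<Rightarrow> real \<Rightarrow> real"
    and f \<mu> :: "real \<Rightarrow> 'm \<Rightarrow> real"
  assumes q: "0 < q" "q < 1"
    and h_cont: "continuous_on {0..1} h"
    and h_mono: "strict_mono_on {0..1} h"
    and h_nonneg: "\<forall>s\<in>{0..1}. 0 \<le> h s"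
    and hinv_mono: "strict_mono hinv"
    and hinv_inv: "\<forall>s\<in>{0..1}. hinv (h s) = s"
    and g_cont: "continuous_on UNIV g"
    and g_mono: "strict_mono g"
    and u_conc: "\<forall>m. \<exists>a b. a < 0 \<and> q < b \<and> concave_on {a<..<b} (u m)
                    \<and> finite {y\<in>{a<..<b}. \<not> (u m differentiable (at y))}"
    and dens: "is_density f"
    and full: "\<forall>\<nu>. feasible q f \<nu> \<longrightarrow>
                 (\<exists>\<nu>'. feasible q f \<nu>' \<and> (\<Sum>m\<in>UNIV. xm f \<nu>' m) = q
                        \<and> xi g h u f \<nu> \<le> xi g h u f \<nu>')"
    and alloc: "is_allocation \<mu>"
    and impl: "implements (Astar h hinv u) q f \<mu>"
  shows "optimal q g h u f \<mu>"
proof -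
  define x where "x m = xm f \<mu> m" for m
  define d where "d m = left_deriv (u m) (x m)" for m
  have sumx: "(\<Sum>m\<in>UNIV. x m) = q" using impl unfolding implements_def x_def by simp
  have featmu: "feasible q f \<mu>" using alloc sumx unfolding feasible_def x_def by simp
  have sep: "h s' + d m' < h s + d m"
    if "s \<in> {0..1}" "s' \<in> {0..1}" "\<mu> s m = 1" "\<mu> s' m' = 0" for s s' m m'
  proof -
    have "Astar h hinv u m' (xm f \<mu> m') s' < Astar h hinv u m (xm f \<mu> m) s"
      using impl that unfolding implements_def by blast
    then show ?thesis unfolding Astar_def d_def x_def
      using hinv_mono by (metis not_less_iff_gr_or_eq strict_mono_less)
  qed
  obtain K where K: "\<forall>s\<in>{0..1}. norm (h s) \<le> K"
    using compact_imp_bounded[OF compact_continuous_image[OF h_cont compact_Icc]]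
    unfolding bounded_iff by auto
  define D where "D = (\<Sum>m\<in>UNIV. \<bar>d m\<bar>)"
  have dD: "\<bar>d m\<bar> \<le> D" for m unfolding D_def
    by (rule member_le_sum) auto
  obtain c where c1: "\<forall>a\<in>{h s + d m |s m. s \<in> {0..1} \<and> \<mu> s m = 1}. c \<le> a"
      and c0: "\<forall>b\<in>{h s + d m |s m. s \<in> {0..1} \<and> \<mu> s m = 0}. b \<le> c"
  proof -
    have "\<exists>c. (\<forall>a\<in>{h s + d m |s m. s \<in> {0..1} \<and> \<mu> s m = 1}. c \<le> a) \<and>
              (\<forall>b\<in>{h s + d m |s m. s \<in> {0..1} \<and> \<mu> s m = 0}. b \<le> c)"
    proof (rule sep_c[where M = "K + D"])
      show "\<forall>a\<in>{h s + d m |s m. s \<in> {0..1} \<and> \<mu> s m = 1}.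
            \<forall>b\<in>{h s + d m |s m. s \<in> {0..1} \<and> \<mu> s m = 0}. b < a"
        using sep by blast
      show "\<forall>a\<in>{h s + d m |s m. s \<in> {0..1} \<and> \<mu> s m = 1}. - (K + D) \<le> a"
      proof safe
        fix s :: real and m assume "s \<in> {0..1}"
        then have "\<bar>h s\<bar> \<le> K" using K by auto
        then show "- (K + D) \<le> h s + d m" using dD[of m] by linarith
      qed
      show "\<forall>b\<in>{h s + d m |s m. s \<in> {0..1} \<and> \<mu> s m = 0}. b \<le> K + D"
      proof safe
        fix s :: real and m assume "s \<in> {0..1}"
        then have "\<bar>h s\<bar> \<le> K" using K by auto
        then show "h s + d m \<le> K + D" using dD[of m] by linarith
      qed
    qed
    then show ?thesis using that by blast
  qed
  have c1': "c \<le> h s + d m" if "s \<in> {0..1}" "\<mu> s m = 1" for s m using c1 that by blast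
  have c0': "h s + d m \<le> c" if "s \<in> {0..1}" "\<mu> s m = 0" for s m using c0 that by blast
  have core: "sbar h f \<nu> + (\<Sum>m\<in>UNIV. u m (xm f \<nu> m)) \<le> sbar h f \<mu> + (\<Sum>m\<in>UNIV. u m (x m))"
    if fe: "feasible q f \<nu>" and sq: "(\<Sum>m\<in>UNIV. xm f \<nu> m) = q" for \<nu>
  proof -
    define y where "y m = xm f \<nu> m" for m
    have al\<nu>: "is_allocation \<nu>" using fe by (simp add: feasible_def)
    have y0: "0 \<le> y m" for m unfolding y_def by (rule xm_nonneg[OF dens al\<nu>])
    have x0: "0 \<le> x m" for m unfolding x_def by (rule xm_nonneg[OF dens alloc])
    have yq: "y m \<le> q" for m
    proof -
      have "y m \<le> (\<Sum>m\<in>UNIV. y m)" by (rule member_le_sum) (auto intro: y0)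
      then show ?thesis using sq by (simp add: y_def)
    qed
    have xq: "x m \<le> q" for m
    proof -
      have "x m \<le> (\<Sum>m\<in>UNIV. x m)" by (rule member_le_sum) (auto intro: x0)
      then show ?thesis using sumx by simp
    qed
    have uineq: "u m (y m) \<le> u m (x m) + d m * (y m - x m)" for m
    proof -
      obtain a b where ab: "a < 0" "q < b" "concave_on {a<..<b} (u m)" using u_conc by blast
      show ?thesis unfolding d_def
        by (rule left_deriv_supergrad[OF ab(3)]) (use ab x0[of m] xq[of m] y0[of m] yq[of m] in auto)
    qed
    have per_m: "(LINT s:{0..1}|lborel. \<nu> s m * h s * f s m) + (d m - c) * y m
        \<le> (LINT s:{0..1}|lborel. \<mu> s m * h s * f s m) + (d m - c) * x m" for m
    proof -
      have i1: "set_integrable lborel {0..1} (\<lambda>s. \<nu> s m * h s * f s m)" by (rule set_int[OF dens al\<nu> h_cont])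
      have i2: "set_integrable lborel {0..1} (\<lambda>s. \<mu> s m * h s * f s m)" by (rule set_int[OF dens alloc h_cont])
      have i3: "set_integrable lborel {0..1} (\<lambda>s. (d m - c) * (\<nu> s m * f s m))"
        using set_int1[OF dens al\<nu>] by auto
      have i4: "set_integrable lborel {0..1} (\<lambda>s. (d m - c) * (\<mu> s m * f s m))"
        using set_int1[OF dens alloc] by auto
      have "(LINT s:{0..1}|lborel. \<nu> s m * h s * f s m + (d m - c) * (\<nu> s m * f s m))
          \<le> (LINT s:{0..1}|lborel. \<mu> s m * h s * f s m + (d m - c) * (\<mu> s m * f s m))"
      proof (rule set_integral_mono)
        show "set_integrable lborel {0..1} (\<lambda>s. \<nu> s m * h s * f s m + (d m - c) * (\<nu> s m * f s m))"
          using i1 i3 by (rule set_integral_add(1))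
        show "set_integrable lborel {0..1} (\<lambda>s. \<mu> s m * h s * f s m + (d m - c) * (\<mu> s m * f s m))"
          using i2 i4 by (rule set_integral_add(1))
        fix s :: real assume s: "s \<in> {0..1}"
        have f0: "0 \<le> f s m" using dens s unfolding is_density_def by auto
        have nv: "\<nu> s m = 0 \<or> \<nu> s m = 1" using al\<nu> s unfolding is_allocation_def by auto
        have mv: "\<mu> s m = 0 \<or> \<mu> s m = 1" using alloc s unfolding is_allocation_def by auto
        show "\<nu> s m * h s * f s m + (d m - c) * (\<nu> s m * f s m)
            \<le> \<mu> s m * h s * f s m + (d m - c) * (\<mu> s m * f s m)"
        proof (cases "\<mu> s m = 1")
          case True
          have "0 \<le> (h s + d m - c) * f s m" using c1'[OF s True] f0 by simp
          then show ?thesis using True nv by (auto simp: algebra_simps)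
        next
          case False
          then have m0: "\<mu> s m = 0" using mv by simp
          have "(h s + d m - c) * f s m \<le> 0" using c0'[OF s m0] f0
            by (simp add: mult_nonpos_nonneg)
          then show ?thesis using m0 nv by (auto simp: algebra_simps)
        qed
      qed
      moreover have "(LINT s:{0..1}|lborel. \<nu> s m * h s * f s m + (d m - c) * (\<nu> s m * f s m))
          = (LINT s:{0..1}|lborel. \<nu> s m * h s * f s m) + (d m - c) * y m"
        using set_integral_add(2)[OF i1 i3] by (simp add: y_def xm_def)
      moreover have "(LINT s:{0..1}|lborel. \<mu> s m * h s * f s m + (d m - c) * (\<mu> s m * f s m))
          = (LINT s:{0..1}|lborel. \<mu> s m * h s * f s m) + (d m - c) * x m"
        using set_integral_add(2)[OF i2 i4] by (simp add: x_def xm_def)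
      ultimately show ?thesis by simp
    qed
    have S: "sbar h f \<nu> + (\<Sum>m\<in>UNIV. (d m - c) * y m) \<le> sbar h f \<mu> + (\<Sum>m\<in>UNIV. (d m - c) * x m)"
      unfolding sbar_def sum.distrib[symmetric] by (rule sum_mono) (rule per_m)
    have e1: "(\<Sum>m\<in>UNIV. (d m - c) * y m) = (\<Sum>m\<in>UNIV. d m * y m) - c * q"
      using sq by (simp add: left_diff_distrib sum_subtractf sum_distrib_left[symmetric] y_def)
    have e2: "(\<Sum>m\<in>UNIV. (d m - c) * x m) = (\<Sum>m\<in>UNIV. d m * x m) - c * q"
      using sumx by (simp add: left_diff_distrib sum_subtractf sum_distrib_left[symmetric])
    have U: "(\<Sum>m\<in>UNIV. u m (y m)) \<le> (\<Sum>m\<in>UNIV. u m (x m)) + ((\<Sum>m\<in>UNIV. d m * y m) - (\<Sum>m\<in>UNIV. d m * x m))"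
    proof -
      have "(\<Sum>m\<in>UNIV. u m (y m)) \<le> (\<Sum>m\<in>UNIV. u m (x m) + d m * (y m - x m))"
        by (rule sum_mono) (rule uineq)
      also have "\<dots> = (\<Sum>m\<in>UNIV. u m (x m)) + ((\<Sum>m\<in>UNIV. d m * y m) - (\<Sum>m\<in>UNIV. d m * x m))"
        by (simp add: sum.distrib right_diff_distrib sum_subtractf)
      finally show ?thesis .
    qed
    show ?thesis using S e1 e2 U unfolding y_def by linarith
  qed
  show ?thesis unfolding optimal_def
  proof (intro conjI allI impI)
    show "feasible q f \<mu>" by (rule featmu)
    fix \<nu> assume fe: "feasible q f \<nu>"
    then obtain \<nu>' where n': "feasible q f \<nu>'" "(\<Sum>m\<in>UNIV. xm f \<nu>' m) = q" "xi g h u f \<nu> \<le> xi g h u f \<nu>'"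
      using full by blast
    have "xi g h u f \<nu>' \<le> xi g h u f \<mu>"
      unfolding xi_def using core[OF n'(1,2)] g_mono unfolding x_def
      by (simp add: strict_mono_leD)
    then show "xi g h u f \<nu> \<le> xi g h u f \<mu>" using n'(3) by linarith
  qed
qed

end
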